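(* Let $X=[x_1\ \cdots\ x_N]\in\mathbb{R}^{n\times N}$ with $\operatorname{rank}(X)=n$, let $m=\nu_n(X)$, and assume $N\ge s\,m$. For $\Lambda=[\eta_1\ \cdots\ \eta_s]\in\mathbb{R}^{n\times s}$ define $$g(\Lambda)=\min\Big\{\sum_{i=1}^s\|X_{J_i}^\top\eta_i\|_1:\ J_1,\ldots,J_s\subset\mathbb{T}\text{ pairwise disjoint},\ |J_i|\ge m\ \forall i\Big\},$$ $\|\Lambda\|_{2,\mathrm{col}}=\sum_{i=1}^s\|\eta_i\|_2$, and $D=\inf\{g(\Lambda):\|\Lambda\|_{2,\mathrm{col}}=1\}$. Then $$D\ge\gamma_m\ge\min_{I\subset\mathbb{T},\,|I|=m}\lambda_{\min}^{1/2}\big(X_IX_I^\top\big),$$ where $\gamma_m=\inf\{\|X_I^\top\eta\|_1:\eta\in\mathbb{R}^n,\ \|\eta\|_2=1,\ I\subset\mathbb{T},\ |I|\ge m\}$.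
   Context: $\mathbb{T}=\{1,\ldots,N\}$. $X_I$ denotes the submatrix of $X$ formed by the columns indexed by $I$. $\lambda_{\min}(\cdot)$ is the smallest eigenvalue of a symmetric matrix. Genericity index: $\nu_n(X)$ is the smallest integer $m$ such that for every $\mathcal{S}\subset\mathbb{T}$ with $|\mathcal{S}|=m$, $\operatorname{rank}(X_{\mathcal{S}})=n$. *)

theory Defs
  imports "HOL-Analysis.Analysis"
begin

text \<open>The matrix X is given by its columns x_1,...,x_N :: real^'n (index set T = {1..N}).\<close>

definition genericity_index :: "(nat \<Rightarrow> real^'n) \<Rightarrow> nat \<Rightarrow> nat" where
  "genericity_index X N =
     (LEAST m. \<forall>S. S \<subseteq> {1..N} \<and> card S = m \<longrightarrow> dim (X ` S) = CARD('n))"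

definition gram_sub :: "(nat \<Rightarrow> real^'n) \<Rightarrow> nat set \<Rightarrow> real^'n^'n" where
  "gram_sub X I = (\<chi> a b. \<Sum>j\<in>I. (X j $ a) * (X j $ b))"

definition eigenvalues_of :: "real^'n^'n \<Rightarrow> real set" where
  "eigenvalues_of A = {l. \<exists>v. v \<noteq> 0 \<and> A *v v = l *\<^sub>R v}"

definition lambda_min :: "real^'n^'n \<Rightarrow> real" where
  "lambda_min A = Min (eigenvalues_of A)"

definition l1_proj :: "(nat \<Rightarrow> real^'n) \<Rightarrow> nat set \<Rightarrow> real^'n \<Rightarrow> real" where
  "l1_proj X J \<eta> = (\<Sum>j\<in>J. \<bar>X j \<bullet> \<eta>\<bar>)"

definition g_fun :: "(nat \<Rightarrow> real^'n) \<Rightarrow> nat \<Rightarrow> nat \<Rightarrow> nat \<Rightarrow> (nat \<Rightarrow> real^'n) \<Rightarrow> real" where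
  "g_fun X N m s \<eta> = Min {(\<Sum>i=1..s. l1_proj X (J i) (\<eta> i)) | J.
      (\<forall>i\<in>{1..s}. J i \<subseteq> {1..N} \<and> card (J i) \<ge> m) \<and>
      (\<forall>i\<in>{1..s}. \<forall>k\<in>{1..s}. i \<noteq> k \<longrightarrow> J i \<inter> J k = {})}"

definition D_const :: "(nat \<Rightarrow> real^'n) \<Rightarrow> nat \<Rightarrow> nat \<Rightarrow> nat \<Rightarrow> real" where
  "D_const X N m s = Inf {g_fun X N m s \<eta> | \<eta>. (\<Sum>i=1..s. norm (\<eta> i)) = 1}"

definition gamma_m :: "(nat \<Rightarrow> real^'n) \<Rightarrow> nat \<Rightarrow> nat \<Rightarrow> real" where
  "gamma_m X N m = Inf {l1_proj X I \<eta> | \<eta> I. norm \<eta> = 1 \<and> I \<subseteq> {1..N} \<and> card I \<ge> m}"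

end

theory Submission imports Defs begin

lemma sym_inner:
  fixes A :: "real^'n^'n"
  assumes "transpose A = A"
  shows "(A *v x) \<bullet> y = x \<bullet> (A *v y)"
proof -
  have "(A *v x) \<bullet> y = (x v* transpose A) \<bullet> y" by simp
  also have "\<dots> = x \<bullet> (transpose A *v y)" by (rule dot_lmul_matrix)
  finally show ?thesis using assms by simp
qed

lemma eig_finite:
  fixes A :: "real^'n^'n"
  assumes sym: "transpose A = A"
  shows "finite (eigenvalues_of A)"
proof -
  let ?E = "eigenvalues_of A"
  define f where "f l = (SOME v. v \<noteq> 0 \<and> A *v v = l *\<^sub>R v)" for l
  have fp: "f l \<noteq> 0 \<and> A *v f l = l *\<^sub>R f l" if "l \<in> ?E" for l
  proof -
    have "\<exists>v. v \<noteq> 0 \<and> A *v v = l *\<^sub>R v" using that by (simp add: eigenvalues_of_def)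
    then show ?thesis unfolding f_def by (rule someI_ex)
  qed
  have inj: "inj_on f ?E"
  proof (rule inj_onI)
    fix l k assume l: "l \<in> ?E" and k: "k \<in> ?E" and e: "f l = f k"
    have a: "A *v f l = l *\<^sub>R f l" and nz: "f l \<noteq> 0" using fp[OF l] by blast+
    have b: "A *v f l = k *\<^sub>R f l" using fp[OF k] e by metis
    have "(l - k) *\<^sub>R f l = 0" using a b by (metis scaleR_left_diff_distrib right_minus_eq)
    then show "l = k" using nz by (metis scaleR_eq_0_iff right_minus_eq)
  qed
  have orth: "pairwise orthogonal (f ` ?E)"
  proof (rule pairwiseI, clarsimp)
    fix l k assume l: "l \<in> ?E" and k: "k \<in> ?E" and ne: "f l \<noteq> f k"
    then have lk: "l \<noteq> k" by auto
    have "l * (f l \<bullet> f k) = (A *v f l) \<bullet> f k" using fp[OF l] by simp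
    also have "\<dots> = f l \<bullet> (A *v f k)" by (rule sym_inner[OF sym])
    also have "\<dots> = k * (f l \<bullet> f k)" using fp[OF k] by simp
    finally have "(l - k) * (f l \<bullet> f k) = 0" by (simp add: algebra_simps)
    then show "orthogonal (f l) (f k)" using lk by (simp add: orthogonal_def)
  qed
  have "0 \<notin> f ` ?E" using fp by auto
  then have "independent (f ` ?E)" using orth pairwise_orthogonal_independent by blast
  then have "finite (f ` ?E)" by (rule finiteI_independent)
  then show ?thesis using inj finite_imageD by blast
qed

lemma quad_zero:
  fixes a b :: real
  assumes "\<And>t. a * t^2 + b * t \<ge> 0"
  shows "b = 0"
proof (rule ccontr)
  assume b: "b \<noteq> 0"
  define c where "c = \<bar>a\<bar> + 1"
  define t where "t = - b / c"
  have p: "c > 0" unfolding c_def by simp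
  have "a * t^2 + b * t = b^2 * (a - c) / c^2"
  proof -
    have "a * t^2 = a * b^2 / c^2" unfolding t_def by (simp add: power_divide)
    moreover have "b * t = - (b^2 * c) / c^2" unfolding t_def using p by (simp add: power2_eq_square)
    ultimately show ?thesis by (simp add: diff_divide_distrib[symmetric] left_diff_distrib mult.commute)
  qed
  also have "\<dots> < 0"
    using b p by (intro divide_neg_pos mult_pos_neg) (auto simp: c_def)
  finally show False using assms[of t] by linarith
qed

lemma rayleigh:
  fixes A :: "real^'n^'n"
  assumes sym: "transpose A = A"
  shows "\<exists>\<mu>\<in>eigenvalues_of A. \<forall>v. norm v = 1 \<longrightarrow> \<mu> \<le> v \<bullet> (A *v v)"
proof -
  define f where "f v = v \<bullet> (A *v v)" for v :: "real^'n"
  have cont: "continuous_on (sphere 0 1) f"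
    unfolding f_def by (intro continuous_intros linear_continuous_on matrix_vector_mul_linear)
  have ne: "sphere (0::real^'n) 1 \<noteq> {}" by simp
  obtain v0 where v0: "v0 \<in> sphere 0 1" and mn: "\<And>y. y \<in> sphere 0 1 \<Longrightarrow> f v0 \<le> f y"
    using continuous_attains_inf[OF compact_sphere ne cont] by blast
  define \<mu> where "\<mu> = f v0"
  have nv0: "norm v0 = 1" using v0 by simp
  have fs: "f (c *\<^sub>R x) = c^2 * f x" for c x
    unfolding f_def by (simp add: matrix_vector_mult_scaleR power2_eq_square)
  have ge: "\<mu> * (x \<bullet> x) \<le> f x" for x
  proof (cases "x = 0")
    case True then show ?thesis by (simp add: f_def)
  next
    case False
    define u where "u = (1 / norm x) *\<^sub>R x"
    have "norm u = 1" using False by (simp add: u_def)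
    then have "\<mu> \<le> f u" using mn unfolding \<mu>_def by simp
    moreover have "f x = (norm x)^2 * f u"
      using fs[of "norm x" u] False by (simp add: u_def)
    ultimately have "(norm x)^2 * \<mu> \<le> f x" by (simp add: mult_left_mono)
    then show ?thesis by (simp add: power2_norm_eq_inner mult.commute)
  qed
  define h where "h x = f x - \<mu> * (x \<bullet> x)" for x
  have h0: "h v0 = 0" unfolding h_def \<mu>_def using nv0 by (simp add: norm_eq_1)
  define r where "r = A *v v0 - \<mu> *\<^sub>R v0"
  have exp: "h (v0 + t *\<^sub>R r) = h r * t^2 + (2 * (r \<bullet> r)) * t" for t
  proof -
    have s1: "(A *v r) \<bullet> v0 = r \<bullet> (A *v v0)" by (rule sym_inner[OF sym])
    have "h (v0 + t *\<^sub>R r) = h v0 + t * (v0 \<bullet> (A *v r) + r \<bullet> (A *v v0) - 2 * \<mu> * (r \<bullet> v0)) + t^2 * h r"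
      unfolding h_def f_def
      by (simp add: matrix_vector_right_distrib matrix_vector_mult_scaleR inner_add_left inner_add_right
          algebra_simps power2_eq_square inner_commute)
    also have "v0 \<bullet> (A *v r) = r \<bullet> (A *v v0)" using s1 by (simp add: inner_commute)
    finally have "h (v0 + t *\<^sub>R r) = t * (2 * (r \<bullet> (A *v v0) - \<mu> * (r \<bullet> v0))) + t^2 * h r"
      using h0 by (simp add: algebra_simps)
    also have "r \<bullet> (A *v v0) - \<mu> * (r \<bullet> v0) = r \<bullet> r"
      by (simp add: r_def inner_diff_right)
    finally show ?thesis by (simp add: algebra_simps)
  qed
  have "\<And>t. h r * t^2 + (2 * (r \<bullet> r)) * t \<ge> 0"
  proof -
    fix t
    have "h (v0 + t *\<^sub>R r) \<ge> 0" using ge[of "v0 + t *\<^sub>R r"] unfolding h_def by linarith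
    then show "h r * t^2 + (2 * (r \<bullet> r)) * t \<ge> 0" using exp by simp
  qed
  then have "2 * (r \<bullet> r) = 0" by (rule quad_zero)
  then have "r = 0" by simp
  then have eig: "A *v v0 = \<mu> *\<^sub>R v0" by (simp add: r_def)
  have "v0 \<noteq> 0" using nv0 by auto
  then have "\<mu> \<in> eigenvalues_of A" using eig unfolding eigenvalues_of_def by blast
  moreover have "\<forall>v. norm v = 1 \<longrightarrow> \<mu> \<le> v \<bullet> (A *v v)"
    using mn unfolding \<mu>_def f_def by simp
  ultimately show ?thesis by blast
qed

lemma gram_sym: "transpose (gram_sub X I) = gram_sub X I"
  by (simp add: transpose_def gram_sub_def vec_eq_iff mult.commute)

lemma gram_quad: "\<eta> \<bullet> (gram_sub X I *v \<eta>) = (\<Sum>j\<in>I. (X j \<bullet> \<eta>)^2)"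
proof -
  have "\<eta> \<bullet> (gram_sub X I *v \<eta>) = (\<Sum>a\<in>UNIV. \<eta>$a * (\<Sum>b\<in>UNIV. (\<Sum>j\<in>I. X j $ a * X j $ b) * \<eta>$b))"
    by (simp add: inner_vec_def matrix_vector_mult_def gram_sub_def)
  also have "\<dots> = (\<Sum>a\<in>UNIV. \<Sum>b\<in>UNIV. \<Sum>j\<in>I. (X j $ a * \<eta>$a) * (X j $ b * \<eta>$b))"
    by (simp add: sum_distrib_left sum_distrib_right mult_ac)
  also have "\<dots> = (\<Sum>a\<in>UNIV. \<Sum>j\<in>I. \<Sum>b\<in>UNIV. (X j $ a * \<eta>$a) * (X j $ b * \<eta>$b))"
    by (rule sum.cong[OF refl], rule sum.swap)
  also have "\<dots> = (\<Sum>j\<in>I. \<Sum>a\<in>UNIV. \<Sum>b\<in>UNIV. (X j $ a * \<eta>$a) * (X j $ b * \<eta>$b))"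
    by (rule sum.swap)
  also have "\<dots> = (\<Sum>j\<in>I. (X j \<bullet> \<eta>)^2)"
    by (simp add: inner_vec_def power2_eq_square sum_product)
  finally show ?thesis .
qed

lemma l1_ge_l2: "sqrt (\<Sum>j\<in>I. (X j \<bullet> \<eta>)^2) \<le> l1_proj X I \<eta>"
  using L2_set_le_sum_abs[of "\<lambda>j. X j \<bullet> \<eta>" I] by (simp add: L2_set_def l1_proj_def)

lemma l1_scale: "l1_proj X J (c *\<^sub>R u) = \<bar>c\<bar> * l1_proj X J u"
  by (simp add: l1_proj_def abs_mult sum_distrib_left)

lemma l1_nonneg: "l1_proj X J u \<ge> 0"
  by (simp add: l1_proj_def sum_nonneg)

theorem lemma8:
  fixes X :: "nat \<Rightarrow> real^'n" and N s m :: nat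
  assumes rank: "dim (X ` {1..N}) = CARD('n)"
    and m_def: "m = genericity_index X N"
    and s_pos: "s \<ge> 1"
    and N_ge: "N \<ge> s * m"
  shows "D_const X N m s \<ge> gamma_m X N m \<and>
         gamma_m X N m \<ge> Min {sqrt (lambda_min (gram_sub X I)) | I. I \<subseteq> {1..N} \<and> card I = m}"
proof -
  have mN: "m \<le> N"
  proof -
    have "\<forall>S. S \<subseteq> {1..N} \<and> card S = N \<longrightarrow> dim (X ` S) = CARD('n)"
    proof (intro allI impI)
      fix S :: "nat set" assume "S \<subseteq> {1..N} \<and> card S = N"
      then have "S = {1..N}" by (metis card_atLeastAtMost card_subset_eq diff_Suc_1 finite_atLeastAtMost)
      then show "dim (X ` S) = CARD('n)" using rank by simp
    qed
    then show ?thesis unfolding m_def genericity_index_def by (rule Least_le)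
  qed
  define G where "G = {l1_proj X I \<eta> | \<eta> I. norm \<eta> = 1 \<and> I \<subseteq> {1..N} \<and> card I \<ge> m}"
  have gam: "gamma_m X N m = Inf G" unfolding gamma_m_def G_def by simp
  have bddG: "bdd_below G" unfolding G_def using l1_nonneg by (intro bdd_belowI[of _ 0]) auto
  obtain e :: "real^'n" where e: "norm e = 1"
    using vector_choose_size[of 1] by auto
  have neG: "G \<noteq> {}"
  proof -
    have "l1_proj X {1..N} e \<in> G" unfolding G_def using e mN by force
    then show ?thesis by blast
  qed
  have gam_le: "gamma_m X N m \<le> l1_proj X I \<eta>"
    if "norm \<eta> = 1" "I \<subseteq> {1..N}" "card I \<ge> m" for \<eta> I
    unfolding gam using that by (intro cInf_lower[OF _ bddG]) (auto simp: G_def)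
  have gam_le2: "gamma_m X N m * norm v \<le> l1_proj X I v"
    if "I \<subseteq> {1..N}" "card I \<ge> m" for v I
  proof (cases "v = 0")
    case True then show ?thesis by (simp add: l1_proj_def)
  next
    case False
    define u where "u = (1 / norm v) *\<^sub>R v"
    have nu: "norm u = 1" using False by (simp add: u_def)
    have vu: "v = norm v *\<^sub>R u" using False by (simp add: u_def)
    have "l1_proj X I v = norm v * l1_proj X I u"
      by (subst vu) (simp add: l1_scale)
    moreover have "gamma_m X N m \<le> l1_proj X I u" using gam_le[OF nu that] .
    ultimately show ?thesis by (simp add: mult_left_mono mult.commute)
  qed
  have partA: "D_const X N m s \<ge> gamma_m X N m"
  proof -
    define DS where "DS = {g_fun X N m s \<eta> | \<eta>. (\<Sum>i=1..s. norm (\<eta> i)) = 1}"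
    have neD: "DS \<noteq> {}"
    proof -
      define \<eta> where "\<eta> i = (if i = 1 then e else 0)" for i :: nat
      have "(\<Sum>i=1..s. norm (\<eta> i)) = (\<Sum>i\<in>{1}. norm (\<eta> i))"
        using s_pos by (intro sum.mono_neutral_right) (auto simp: \<eta>_def)
      also have "\<dots> = 1" using e by (simp add: \<eta>_def)
      finally show ?thesis unfolding DS_def by blast
    qed
    have "gamma_m X N m \<le> x" if xD: "x \<in> DS" for x
    proof -
      obtain \<eta> where x: "x = g_fun X N m s \<eta>" and sn: "(\<Sum>i=1..s. norm (\<eta> i)) = 1"
        using xD unfolding DS_def by blast
      define S where "S = {(\<Sum>i=1..s. l1_proj X (J i) (\<eta> i)) | J.
        (\<forall>i\<in>{1..s}. J i \<subseteq> {1..N} \<and> card (J i) \<ge> m) \<and>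
        (\<forall>i\<in>{1..s}. \<forall>k\<in>{1..s}. i \<noteq> k \<longrightarrow> J i \<inter> J k = {})}"
      have xS: "x = Min S" unfolding x g_fun_def S_def by simp
      have finS: "finite S"
      proof -
        have "S \<subseteq> (\<lambda>J. \<Sum>i=1..s. l1_proj X (J i) (\<eta> i)) ` (PiE {1..s} (\<lambda>_. Pow {1..N}))"
        proof
          fix y assume "y \<in> S"
          then obtain J where y: "y = (\<Sum>i=1..s. l1_proj X (J i) (\<eta> i))"
            and J: "\<forall>i\<in>{1..s}. J i \<subseteq> {1..N} \<and> card (J i) \<ge> m" unfolding S_def by blast
          have "restrict J {1..s} \<in> PiE {1..s} (\<lambda>_. Pow {1..N})" using J by auto
          moreover have "y = (\<Sum>i=1..s. l1_proj X (restrict J {1..s} i) (\<eta> i))"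
            unfolding y by (intro sum.cong) auto
          ultimately show "y \<in> (\<lambda>J. \<Sum>i=1..s. l1_proj X (J i) (\<eta> i)) ` (PiE {1..s} (\<lambda>_. Pow {1..N}))"
            by blast
        qed
        then show ?thesis by (rule finite_subset) (intro finite_imageI finite_PiE; simp)
      qed
      have neS: "S \<noteq> {}"
      proof -
        define J where "J i = {(i-1)*m+1..i*m}" for i :: nat
        have c1: "\<forall>i\<in>{1..s}. J i \<subseteq> {1..N} \<and> card (J i) \<ge> m"
        proof
          fix i assume i: "i \<in> {1..s}"
          have "i * m \<le> s * m" using i by simp
          then have "i * m \<le> N" using N_ge by linarith
          then have "J i \<subseteq> {1..N}" by (auto simp: J_def)
          moreover have "card (J i) = m" using i
            by (cases i) (auto simp: J_def)
          ultimately show "J i \<subseteq> {1..N} \<and> card (J i) \<ge> m" by simp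
        qed
        have c2: "\<forall>i\<in>{1..s}. \<forall>k\<in>{1..s}. i \<noteq> k \<longrightarrow> J i \<inter> J k = {}"
        proof (intro ballI impI)
          fix i k :: nat assume i: "i \<in> {1..s}" and k: "k \<in> {1..s}" and ik: "i \<noteq> k"
          have dis: "J a \<inter> J b = {}" if "a < b" "1 \<le> a" for a b
          proof -
            have "a \<le> b - 1" using that by simp
            then have am: "a * m \<le> (b - 1) * m" by (rule mult_le_mono1)
            have "x \<notin> J b" if "x \<in> J a" for x
            proof -
              have "x \<le> a * m" using that by (simp add: J_def)
              then have "x < (b-1)*m+1" using am by linarith
              then show ?thesis by (simp add: J_def)
            qed
            then show ?thesis by blast
          qed
          show "J i \<inter> J k = {}"
          proof (cases "i < k")
            case True then show ?thesis using dis i by auto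
          next
            case False then have "k < i" using ik by simp
            then show ?thesis using dis[of k i] k by auto
          qed
        qed
        show ?thesis unfolding S_def using c1 c2 by blast
      qed
      have "gamma_m X N m \<le> y" if "y \<in> S" for y
      proof -
        obtain J where y: "y = (\<Sum>i=1..s. l1_proj X (J i) (\<eta> i))"
          and J: "\<forall>i\<in>{1..s}. J i \<subseteq> {1..N} \<and> card (J i) \<ge> m" using \<open>y \<in> S\<close> unfolding S_def by blast
        have "gamma_m X N m = (\<Sum>i=1..s. gamma_m X N m * norm (\<eta> i))"
          using sn by (simp add: sum_distrib_left[symmetric])
        also have "\<dots> \<le> y" unfolding y using J gam_le2 by (intro sum_mono) auto
        finally show ?thesis .
      qed
      then show ?thesis unfolding xS using finS neS by simp
    qed
    then show ?thesis unfolding D_const_def DS_def[symmetric] using neD by (intro cInf_greatest) auto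
  qed
  have partB: "gamma_m X N m \<ge> Min {sqrt (lambda_min (gram_sub X I)) | I. I \<subseteq> {1..N} \<and> card I = m}"
    (is "_ \<ge> Min ?M")
  proof -
    have finM: "finite ?M"
    proof -
      have "?M \<subseteq> (\<lambda>I. sqrt (lambda_min (gram_sub X I))) ` Pow {1..N}" by auto
      then show ?thesis by (rule finite_subset) simp
    qed
    have "Min ?M \<le> z" if "z \<in> G" for z
    proof -
      obtain \<eta> I where z: "z = l1_proj X I \<eta>" and n: "norm \<eta> = 1" and I: "I \<subseteq> {1..N}"
        and cI: "card I \<ge> m" using \<open>z \<in> G\<close> unfolding G_def by blast
      obtain I' where I': "I' \<subseteq> I" "card I' = m" "finite I'"
        using obtain_subset_with_card_n[OF cI] by blast
      have "Min ?M \<le> sqrt (lambda_min (gram_sub X I'))"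
        using finM I' I by (intro Min_le) auto
      also have "lambda_min (gram_sub X I') \<le> \<eta> \<bullet> (gram_sub X I' *v \<eta>)"
      proof -
        obtain \<mu> where mu: "\<mu> \<in> eigenvalues_of (gram_sub X I')"
          and mule: "\<forall>v. norm v = 1 \<longrightarrow> \<mu> \<le> v \<bullet> (gram_sub X I' *v v)"
          using rayleigh[OF gram_sym] by blast
        have "lambda_min (gram_sub X I') \<le> \<mu>"
          unfolding lambda_min_def using eig_finite[OF gram_sym] mu by (rule Min_le)
        then show ?thesis using mule n by fastforce
      qed
      then have "sqrt (lambda_min (gram_sub X I')) \<le> sqrt (\<Sum>j\<in>I'. (X j \<bullet> \<eta>)^2)"
        by (simp add: gram_quad)
      also have "\<dots> \<le> l1_proj X I' \<eta>" by (rule l1_ge_l2)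
      also have "\<dots> \<le> l1_proj X I \<eta>"
        unfolding l1_proj_def using I' I by (intro sum_mono2) (auto intro: finite_subset)
      finally show ?thesis unfolding z .
    qed
    then show ?thesis unfolding gam using neG by (intro cInf_greatest) auto
  qed
  show ?thesis using partA partB by simp
qed

end
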